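(* Let $X$ be a shift space and $\varphi$ a flip for $(X,\sigma_X)$. Then there are a finite set $\mathcal{A}$, a map $\Phi:\mathcal{A}\to\mathcal{B}_1(X)$, a shift space $Y$ over $\mathcal{A}$ and a one-block flip $\psi$ for $(Y,\sigma_Y)$ such that $\Phi_\infty$ is a conjugacy from $(Y,\sigma_Y,\psi)$ to $(X,\sigma_X,\varphi)$.
   Context: For a shift space $X$, $\sigma_X$ is the shift map and $\mathcal{B}_1(X)$ the set of symbols occurring in $X$. A flip for $(X,\sigma_X)$ is a homeomorphism $\varphi:X\to X$ with $\varphi\sigma_X=\sigma_X^{-1}\varphi$ and $\varphi^2=\mathrm{id}_X$. A flip $\psi$ for $(Y,\sigma_Y)$ is one-block if $y,y'\in Y$, $y_0=y'_0$ imply $\psi(y)_0=\psi(y')_0$ (equivalently, $\psi(y)_i=\tau(y_{-i})$ for some $\tau$ with $\tau^2=\mathrm{id}$). $\Phi_\infty$ denotes the one-block code $\Phi_\infty(y)_i=\Phi(y_i)$. A conjugacy from $(Y,\sigma_Y,\psi)$ to $(X,\sigma_X,\varphi)$ is a homeomorphism $\theta:Y\to X$ with $\theta\circ\sigma_Y=\sigma_X\circ\theta$ and $\theta\circ\psi=\varphi\circ\theta$. *)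

theory Defs
  imports "HOL-Analysis.Analysis"
begin

definition full_shift_top :: "'a set \<Rightarrow> (int \<Rightarrow> 'a) topology" where
  "full_shift_top A = product_topology (\<lambda>_::int. discrete_topology A) UNIV"

definition shift :: "(int \<Rightarrow> 'a) \<Rightarrow> (int \<Rightarrow> 'a)" where
  "shift x = (\<lambda>i. x (i + 1))"

definition shift_inv :: "(int \<Rightarrow> 'a) \<Rightarrow> (int \<Rightarrow> 'a)" where
  "shift_inv x = (\<lambda>i. x (i - 1))"

definition shift_space :: "'a set \<Rightarrow> (int \<Rightarrow> 'a) set \<Rightarrow> bool" where
  "shift_space A X \<longleftrightarrow> finite A \<and> X \<subseteq> topspace (full_shift_top A)
     \<and> closedin (full_shift_top A) X \<and> shift ` X = X"

definition B1 :: "(int \<Rightarrow> 'a) set \<Rightarrow> 'a set" where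
  "B1 X = {x i | x i. x \<in> X}"

definition shift_top :: "'a set \<Rightarrow> (int \<Rightarrow> 'a) set \<Rightarrow> (int \<Rightarrow> 'a) topology" where
  "shift_top A X = subtopology (full_shift_top A) X"

definition is_flip :: "'a set \<Rightarrow> (int \<Rightarrow> 'a) set \<Rightarrow> ((int \<Rightarrow> 'a) \<Rightarrow> (int \<Rightarrow> 'a)) \<Rightarrow> bool" where
  "is_flip A X \<phi> \<longleftrightarrow> homeomorphic_map (shift_top A X) (shift_top A X) \<phi>
     \<and> (\<forall>x\<in>X. \<phi> (shift x) = shift_inv (\<phi> x))
     \<and> (\<forall>x\<in>X. \<phi> (\<phi> x) = x)"

definition one_block_flip :: "'a set \<Rightarrow> (int \<Rightarrow> 'a) set \<Rightarrow> ((int \<Rightarrow> 'a) \<Rightarrow> (int \<Rightarrow> 'a)) \<Rightarrow> bool" where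
  "one_block_flip A Y \<psi> \<longleftrightarrow> is_flip A Y \<psi>
     \<and> (\<forall>y\<in>Y. \<forall>y'\<in>Y. y 0 = y' 0 \<longrightarrow> \<psi> y 0 = \<psi> y' 0)"

definition block_code :: "('b \<Rightarrow> 'a) \<Rightarrow> (int \<Rightarrow> 'b) \<Rightarrow> (int \<Rightarrow> 'a)" where
  "block_code \<Phi> y = (\<lambda>i. \<Phi> (y i))"

definition flip_conjugacy ::
  "'b set \<Rightarrow> (int \<Rightarrow> 'b) set \<Rightarrow> ((int \<Rightarrow> 'b) \<Rightarrow> (int \<Rightarrow> 'b)) \<Rightarrow>
   'a set \<Rightarrow> (int \<Rightarrow> 'a) set \<Rightarrow> ((int \<Rightarrow> 'a) \<Rightarrow> (int \<Rightarrow> 'a)) \<Rightarrow>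
   ((int \<Rightarrow> 'b) \<Rightarrow> (int \<Rightarrow> 'a)) \<Rightarrow> bool" where
  "flip_conjugacy B Y \<psi> A X \<phi> \<theta> \<longleftrightarrow>
     homeomorphic_map (shift_top B Y) (shift_top A X) \<theta>
     \<and> (\<forall>y\<in>Y. \<theta> (shift y) = shift (\<theta> y))
     \<and> (\<forall>y\<in>Y. \<theta> (\<psi> y) = \<phi> (\<theta> y))"

end

theory Submission
  imports Defs
begin

lemma top_full: "topspace (full_shift_top A) = {x. \<forall>i. x i \<in> A}"
  by (auto simp: full_shift_top_def PiE_UNIV_domain)

lemma proj_cont: "continuous_map (full_shift_top A) (discrete_topology A) (\<lambda>x. x i)"
  unfolding full_shift_top_def by (rule continuous_map_product_projection) simp

lemma proj_cont_sub: "continuous_map (shift_top A S) (discrete_topology A) (\<lambda>x. x i)"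
  unfolding shift_top_def by (rule continuous_map_from_subtopology[OF proj_cont])

lemma into_shift_top:
  "continuous_map Z (shift_top A S) f \<longleftrightarrow>
     (\<forall>i. continuous_map Z (discrete_topology A) (\<lambda>z. f z i)) \<and> f ` topspace Z \<subseteq> S"
  unfolding shift_top_def continuous_map_in_subtopology full_shift_top_def
    continuous_map_componentwise_UNIV by blast

lemma topspace_shift_top: "S \<subseteq> topspace (full_shift_top A) \<Longrightarrow> topspace (shift_top A S) = S"
  unfolding shift_top_def by auto

lemma compact_full: "finite A \<Longrightarrow> compact_space (full_shift_top A)"
  unfolding full_shift_top_def
  by (simp add: compact_space_product_topology compact_space_discrete_topology)

theorem lemma3p1:
  fixes A :: "'a set" and X :: "(int \<Rightarrow> 'a) set" and \<phi> :: "(int \<Rightarrow> 'a) \<Rightarrow> (int \<Rightarrow> 'a)"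
  assumes "shift_space A X" and "is_flip A X \<phi>"
  shows "\<exists>(\<A>::nat set) (\<Phi>::nat \<Rightarrow> 'a) Y \<psi>.
           finite \<A> \<and> \<Phi> ` \<A> \<subseteq> B1 X \<and> shift_space \<A> Y \<and> one_block_flip \<A> Y \<psi>
           \<and> flip_conjugacy \<A> Y \<psi> A X \<phi> (block_code \<Phi>)"
proof -
  have finA: "finite A" and Xsub: "X \<subseteq> topspace (full_shift_top A)"
    and Xcl: "closedin (full_shift_top A) X" and shX: "shift ` X = X"
    using assms(1) by (auto simp: shift_space_def)
  have phih: "homeomorphic_map (shift_top A X) (shift_top A X) \<phi>"
    and phish: "\<And>x. x \<in> X \<Longrightarrow> \<phi> (shift x) = shift_inv (\<phi> x)"
    and phiinv: "\<And>x. x \<in> X \<Longrightarrow> \<phi> (\<phi> x) = x"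
    using assms(2) by (auto simp: is_flip_def)
  have tX: "topspace (shift_top A X) = X" using topspace_shift_top[OF Xsub] .
  have phiX: "\<And>x. x \<in> X \<Longrightarrow> \<phi> x \<in> X"
    using homeomorphic_imp_surjective_map[OF phih] tX by blast
  have phic: "continuous_map (shift_top A X) (shift_top A X) \<phi>"
    using phih homeomorphic_imp_continuous_map by blast
  have XA: "\<And>x i. x \<in> X \<Longrightarrow> x i \<in> A" using Xsub by (auto simp: top_full)
  have B1A: "B1 X \<subseteq> A" using XA by (auto simp: B1_def)
  define C where "C = B1 X \<times> B1 X"
  have finC: "finite C" unfolding C_def using B1A finA finite_subset by blast
  define e where "e = to_nat_on C"
  have inj: "inj_on e C" unfolding e_def by (rule inj_on_to_nat_on) (simp add: finC countable_finite)
  define D where "D = inv_into C e"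
  have De: "\<And>p. p \<in> C \<Longrightarrow> D (e p) = p" unfolding D_def using inj by simp
  define \<A> where "\<A> = e ` C"
  define \<Phi> where "\<Phi> = (\<lambda>n. fst (D n))"
  define \<tau> where "\<tau> = (\<lambda>n. e (prod.swap (D n)))"
  define h where "h = (\<lambda>x i. e (x i, \<phi> x (-i)))"
  define Y where "Y = h ` X"
  define \<psi> where "\<psi> = (\<lambda>(y::int \<Rightarrow> nat) (i::int). \<tau> (y (-i)))"
  have hC: "\<And>x i. x \<in> X \<Longrightarrow> (x i, \<phi> x (-i)) \<in> C"
    unfolding C_def B1_def using phiX by blast
  have Phih: "\<And>x. x \<in> X \<Longrightarrow> block_code \<Phi> (h x) = x"
    by (simp add: block_code_def \<Phi>_def h_def De hC)
  have YA: "\<And>y i. y \<in> Y \<Longrightarrow> y i \<in> \<A>"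
    unfolding Y_def \<A>_def h_def using hC by blast
  have Ysub: "Y \<subseteq> topspace (full_shift_top \<A>)" using YA by (auto simp: top_full)
  have tY: "topspace (shift_top \<A> Y) = Y" using topspace_shift_top[OF Ysub] .
  have h_shift: "\<And>x. x \<in> X \<Longrightarrow> h (shift x) = shift (h x)"
  proof -
    fix x assume x: "x \<in> X"
    have "\<phi> (shift x) = shift_inv (\<phi> x)" using phish[OF x] .
    then show "h (shift x) = shift (h x)"
      unfolding h_def by (simp add: shift_def shift_inv_def algebra_simps)
  qed
  have shY: "shift ` Y = Y"
  proof -
    have "shift ` Y = h ` shift ` X" unfolding Y_def image_image using h_shift by simp
    then show ?thesis using shX Y_def by simp
  qed
  have finAA: "finite \<A>" unfolding \<A>_def using finC by simp
  have hcont: "continuous_map (shift_top A X) (shift_top \<A> Y) h"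
    unfolding into_shift_top
  proof
    show "\<forall>i. continuous_map (shift_top A X) (discrete_topology \<A>) (\<lambda>z. h z i)"
    proof
      fix i
      have c1: "continuous_map (shift_top A X) (prod_topology (discrete_topology A) (discrete_topology A))
                 (\<lambda>x. (x i, \<phi> x (-i)))"
        by (intro continuous_map_pairedI proj_cont_sub continuous_map_compose[OF phic proj_cont_sub, unfolded o_def])
      have c2: "continuous_map (shift_top A X) (discrete_topology (A \<times> A \<inter> C)) (\<lambda>x. (x i, \<phi> x (-i)))"
      proof -
        have c1': "continuous_map (shift_top A X) (discrete_topology (A \<times> A)) (\<lambda>x. (x i, \<phi> x (-i)))"
          using c1 by (simp only: prod_topology_discrete_topology)
        have "continuous_map (shift_top A X) (subtopology (discrete_topology (A \<times> A)) C) (\<lambda>x. (x i, \<phi> x (-i)))"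
          unfolding continuous_map_in_subtopology using c1' hC tX by auto
        then show ?thesis by (simp only: subtopology_discrete_topology)
      qed
      have c3: "continuous_map (discrete_topology (A \<times> A \<inter> C)) (discrete_topology \<A>) e"
        by (auto simp: \<A>_def)
      show "continuous_map (shift_top A X) (discrete_topology \<A>) (\<lambda>z. h z i)"
        using continuous_map_compose[OF c2 c3] by (simp add: o_def h_def)
    qed
    show "h ` topspace (shift_top A X) \<subseteq> Y" using tX Y_def by simp
  qed
  have Phicont: "continuous_map (shift_top \<A> Y) (shift_top A X) (block_code \<Phi>)"
    unfolding into_shift_top
  proof
    show "\<forall>i. continuous_map (shift_top \<A> Y) (discrete_topology A) (\<lambda>z. block_code \<Phi> z i)"
    proof
      fix i
      have c3: "continuous_map (discrete_topology \<A>) (discrete_topology A) \<Phi>"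
        using B1A by (auto simp: \<A>_def \<Phi>_def De C_def)
      show "continuous_map (shift_top \<A> Y) (discrete_topology A) (\<lambda>z. block_code \<Phi> z i)"
        using continuous_map_compose[OF proj_cont_sub c3] by (simp add: o_def block_code_def)
    qed
    show "block_code \<Phi> ` topspace (shift_top \<A> Y) \<subseteq> X" using tY Y_def Phih by auto
  qed
  have hm: "homeomorphic_maps (shift_top \<A> Y) (shift_top A X) (block_code \<Phi>) h"
    unfolding homeomorphic_maps_def using hcont Phicont tX tY Phih Y_def by auto
  have Phihom: "homeomorphic_map (shift_top \<A> Y) (shift_top A X) (block_code \<Phi>)"
    using hm homeomorphic_map_maps by blast
  have hhom: "homeomorphic_map (shift_top A X) (shift_top \<A> Y) h"
    using hm homeomorphic_map_maps homeomorphic_maps_sym by blast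
  have Ycl: "closedin (full_shift_top \<A>) Y"
  proof -
    have "compactin (full_shift_top A) X" using closedin_compact_space[OF compact_full[OF finA] Xcl] .
    then have "compactin (shift_top A X) X" by (simp add: shift_top_def compactin_subtopology)
    then have "compactin (shift_top \<A> Y) Y" using image_compactin[OF _ hcont] Y_def by blast
    then have "compactin (full_shift_top \<A>) Y" by (simp add: shift_top_def compactin_subtopology)
    moreover have "Hausdorff_space (full_shift_top \<A>)"
      by (simp add: full_shift_top_def Hausdorff_space_product_topology)
    ultimately show ?thesis using compactin_imp_closedin by blast
  qed
  have psih: "\<And>x. x \<in> X \<Longrightarrow> \<psi> (h x) = h (\<phi> x)"
  proof -
    fix x assume x: "x \<in> X"
    have "\<And>i. D (e (x (-i), \<phi> x i)) = (x (-i), \<phi> x i)"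
      using De[OF hC[OF x, of "-i" for i]] by simp
    then show "\<psi> (h x) = h (\<phi> x)" by (simp add: \<psi>_def \<tau>_def h_def phiinv x)
  qed
  have psieq: "\<And>y. y \<in> Y \<Longrightarrow> \<psi> y = (h \<circ> (\<phi> \<circ> block_code \<Phi>)) y"
    using psih Phih Y_def by auto
  have psihom: "homeomorphic_map (shift_top \<A> Y) (shift_top \<A> Y) \<psi>"
  proof (rule homeomorphic_map_eq)
    show "homeomorphic_map (shift_top \<A> Y) (shift_top \<A> Y) (h \<circ> (\<phi> \<circ> block_code \<Phi>))"
      by (rule homeomorphic_map_compose[OF homeomorphic_map_compose[OF Phihom phih] hhom])
    show "\<And>y. y \<in> topspace (shift_top \<A> Y) \<Longrightarrow> (h \<circ> (\<phi> \<circ> block_code \<Phi>)) y = \<psi> y"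
      using psieq tY by simp
  qed
  have psish: "\<And>y. \<psi> (shift y) = shift_inv (\<psi> y)"
    by (simp add: \<psi>_def shift_def shift_inv_def algebra_simps)
  have psiinv: "\<And>y. y \<in> Y \<Longrightarrow> \<psi> (\<psi> y) = y"
    using psih phiX phiinv Y_def by auto
  have flip: "one_block_flip \<A> Y \<psi>"
    unfolding one_block_flip_def is_flip_def using psihom psish psiinv by (simp add: \<psi>_def)
  have conj: "flip_conjugacy \<A> Y \<psi> A X \<phi> (block_code \<Phi>)"
    unfolding flip_conjugacy_def
    using Phihom psih Phih phiX Y_def by (auto simp: block_code_def shift_def)
  have "\<Phi> ` \<A> \<subseteq> B1 X" by (auto simp: \<A>_def \<Phi>_def De C_def)
  moreover have "shift_space \<A> Y" unfolding shift_space_def using finAA Ysub Ycl shY by simp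
  ultimately show ?thesis using finAA flip conj by blast
qed

end
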